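(* In the setting described in the context, $$\sigma_{\mathrm{noise}}^2=\lambda_{\max}(\Sigma_{\varepsilon,\mathrm{cent}})\le\mathrm{tr}(\Sigma_{\varepsilon,\mathrm{cent}})\le\mathbb{E}\|\varepsilon_s\|_2^2=\mathbb{E}\,D(\bar w^{(s)})^2,$$ and the right-hand side equals $\sum_{j=1}^{d-1}\left(\frac{\eta\sigma^2}{2\lambda_j-\eta\lambda_j^2}\right)\frac{1}{N^2}\left[N+2\sum_{r=1}^{N-1}(N-r)(1-\eta\lambda_j)^{rT}\right]$.
   Context: Let $d\ge2$, $v\in\mathbb{R}^d$ a unit vector, $P_F=vv^\top$, $P_S=I-vv^\top$, $w_\star\in\mathbb{R}^d$. The loss is $L(w)=\ell(v^\top(w-w_\star))+\tfrac12\|H^{1/2}P_S(w-w_\star)\|_2^2$ with $\ell\in C^2(\mathbb{R})$, $H$ symmetric PSD, $HP_F=0$, $HP_S=P_SH=H$, and eigenvalues $\lambda_1,\dots,\lambda_{d-1}$ of $H$ on $\mathrm{range}(P_S)$ in $[\mu,L_S]$, $0<\mu\le L_S$. SGD: $w_{k+1}=w_k-\eta\nabla L(w_k)-\eta\mu_Fv+\eta g_k$ with $\eta\in(0,2/L_S)$, $\mu_F>0$, $(g_k)$ i.i.d. $\mathcal N(0,\sigma^2P_S)$; the mountain coordinates $P_S(w_k-w_\star)$ are stationary for $k\ge k_0$. Checkpoints $w^{(m)}=w_{k_0+mT}$; sliding-window merges $\bar w^{(s)}=\frac1N\sum_{i=0}^{N-1}w^{(s+i)}$, $s=0,\dots,K-1$;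 $\varepsilon_s=P_S(\bar w^{(s)}-w_\star)$, $\tilde\varepsilon_s=\varepsilon_s-\frac1K\sum_{r=0}^{K-1}\varepsilon_r$; $D(w)=\|P_S(w-w_\star)\|_2$; $\Sigma_{\varepsilon,\mathrm{cent}}:=\mathbb{E}[\tilde\varepsilon_s\tilde\varepsilon_s^\top]$ and $\sigma_{\mathrm{noise}}^2:=\lambda_{\max}(\Sigma_{\varepsilon,\mathrm{cent}})$, where expectations are taken jointly over the SGD noise and an index $s$ uniform on $\{0,\dots,K-1\}$. *)

theory Defs
  imports "HOL-Probability.Probability"
begin

definition outer :: "real^'n \<Rightarrow> real^'n \<Rightarrow> real^'n^'n" where
  "outer a b = (\<chi> i j. a $ i * b $ j)"

definition PF :: "real^'n \<Rightarrow> real^'n^'n" where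
  "PF v = outer v v"

definition PS :: "real^'n \<Rightarrow> real^'n^'n" where
  "PS v = mat 1 - outer v v"

text \<open>The loss L(w) = l(v^T(w-w*)) + 1/2 ||H^(1/2) P_S (w-w*)||^2, where
  ||H^(1/2) y||^2 is written as y^T H y.\<close>
definition lossL :: "(real \<Rightarrow> real) \<Rightarrow> real^'n \<Rightarrow> real^'n^'n \<Rightarrow> real^'n \<Rightarrow> real^'n \<Rightarrow> real" where
  "lossL l v H wstar w =
     l (v \<bullet> (w - wstar)) + 1/2 * ((PS v *v (w - wstar)) \<bullet> (H *v (PS v *v (w - wstar))))"

definition lambda_max :: "real^'n^'n \<Rightarrow> real" where
  "lambda_max A = Max {c. \<exists>x. x \<noteq> 0 \<and> A *v x = c *\<^sub>R x}"

definition Dist :: "real^'n \<Rightarrow> real^'n \<Rightarrow> real^'n \<Rightarrow> real" where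
  "Dist v wstar w = norm (PS v *v (w - wstar))"

end

theory Submission
  imports Defs
begin

lemma PS_mult: "PS v *v x = x - (v \<bullet> x) *\<^sub>R v"
  unfolding PS_def outer_def
  by (simp add: vec_eq_iff matrix_vector_mult_def inner_vec_def sum_subtractf
      sum_distrib_left mat_def algebra_simps if_distrib[of "\<lambda>a. _ * a"] cong: if_cong)

lemma PS_sym: "(PS v *v x) \<bullet> y = x \<bullet> (PS v *v y)"
  by (simp add: PS_mult inner_diff_left inner_diff_right inner_commute)

lemma sym_mat: assumes "transpose A = A" shows "((A::real^'n^'n) *v x) \<bullet> y = x \<bullet> (A *v y)"
  by (metis assms dot_lmul_matrix vector_transpose_matrix inner_commute)

lemma HPS_vec: assumes "H ** PS v = H" shows "H *v (PS v *v x) = H *v x"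
  by (metis assms matrix_vector_mul_assoc)

lemma grad_formula:
  fixes v wstar x :: "real^'n" and H :: "real^'n^'n"
  assumes l_d1: "\<And>x. (l has_real_derivative l' x) (at x)"
    and H_sym: "transpose H = H"
    and H_PS: "H ** PS v = H" and PS_H: "PS v ** H = H"
    and grad: "\<And>x. (lossL l v H wstar has_derivative (\<lambda>h. gradL x \<bullet> h)) (at x)"
  shows "gradL x = l' (v \<bullet> (x - wstar)) *\<^sub>R v + H *v (x - wstar)"
proof -
  let ?G = "l' (v \<bullet> (x - wstar)) *\<^sub>R v + H *v (x - wstar)"
  have lin: "((\<lambda>y. A *v (y - wstar)) has_derivative (\<lambda>h. A *v h)) (at x)" for A :: "real^'n^'n"
  proof -
    have "bounded_linear (\<lambda>h. A *v h)" by (simp add: matrix_vector_mul_bounded_linear)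
    then have "((\<lambda>y. A *v y) has_derivative (\<lambda>h. A *v h)) (at x)"
      using bounded_linear.has_derivative[OF _ has_derivative_ident] by blast
    then show ?thesis
      using has_derivative_diff[OF _ has_derivative_const[of "A *v wstar"]]
      by (simp add: matrix_vector_mult_diff_distrib)
  qed
  have d1: "((\<lambda>y. l (v \<bullet> (y - wstar))) has_derivative (\<lambda>h. l' (v \<bullet> (x - wstar)) * (v \<bullet> h))) (at x)"
  proof -
    have a: "((\<lambda>y. v \<bullet> (y - wstar)) has_derivative (\<lambda>h. v \<bullet> h)) (at x)"
      by (auto intro!: derivative_eq_intros)
    have b: "(l has_derivative (\<lambda>h. l' (v \<bullet> (x - wstar)) * h)) (at (v \<bullet> (x - wstar)))"
      using l_d1 by (simp add: has_field_derivative_def)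
    show ?thesis using has_derivative_compose[OF a b] by (simp add: o_def)
  qed
  have d2: "((\<lambda>y. (PS v *v (y - wstar)) \<bullet> (H *v (PS v *v (y - wstar)))) has_derivative
      (\<lambda>h. (PS v *v (x - wstar)) \<bullet> (H *v (PS v *v h)) + (PS v *v h) \<bullet> (H *v (PS v *v (x - wstar))))) (at x)"
  proof -
    have e: "(\<lambda>y. H *v (PS v *v (y - wstar))) = (\<lambda>y. (H ** PS v) *v (y - wstar))"
      by (simp add: matrix_vector_mul_assoc)
    have e2: "(\<lambda>h. H *v (PS v *v h)) = (\<lambda>h. (H ** PS v) *v h)"
      by (simp add: matrix_vector_mul_assoc)
    show ?thesis
      using has_derivative_inner[OF lin[of "PS v"] lin[of "H ** PS v"]]
      by (simp add: matrix_vector_mul_assoc)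
  qed
  have "(lossL l v H wstar has_derivative (\<lambda>h. ?G \<bullet> h)) (at x)"
  proof -
    have "(lossL l v H wstar has_derivative (\<lambda>h. l' (v \<bullet> (x - wstar)) * (v \<bullet> h) + 1/2 *
      ((PS v *v (x - wstar)) \<bullet> (H *v (PS v *v h)) + (PS v *v h) \<bullet> (H *v (PS v *v (x - wstar)))))) (at x)"
      unfolding lossL_def[abs_def]
      by (intro has_derivative_add d1 has_derivative_mult_right d2)
    moreover have "(\<lambda>h. l' (v \<bullet> (x - wstar)) * (v \<bullet> h) + 1/2 *
      ((PS v *v (x - wstar)) \<bullet> (H *v (PS v *v h)) + (PS v *v h) \<bullet> (H *v (PS v *v (x - wstar))))) = (\<lambda>h. ?G \<bullet> h)"
    proof
      fix h
      have 1: "(PS v *v (x - wstar)) \<bullet> (H *v (PS v *v h)) = (H *v (x - wstar)) \<bullet> h"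
        unfolding HPS_vec[OF H_PS] sym_mat[OF H_sym, symmetric] HPS_vec[OF H_PS] ..
      have 2: "(PS v *v h) \<bullet> (H *v (PS v *v (x - wstar))) = (H *v (x - wstar)) \<bullet> h"
      proof -
        have "(PS v *v h) \<bullet> (H *v (PS v *v (x - wstar))) = (PS v *v h) \<bullet> (H *v (x - wstar))"
          by (simp only: HPS_vec[OF H_PS])
        also have "\<dots> = h \<bullet> (PS v *v (H *v (x - wstar)))" by (rule PS_sym)
        also have "PS v *v (H *v (x - wstar)) = H *v (x - wstar)"
          by (simp only: matrix_vector_mul_assoc PS_H)
        finally show ?thesis by (simp only: inner_commute)
      qed
      show "l' (v \<bullet> (x - wstar)) * (v \<bullet> h) + 1/2 *
      ((PS v *v (x - wstar)) \<bullet> (H *v (PS v *v h)) + (PS v *v h) \<bullet> (H *v (PS v *v (x - wstar)))) = ?G \<bullet> h"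
        unfolding 1 2 by (simp add: inner_add_left)
    qed
    ultimately show ?thesis by simp
  qed
  then have "(\<lambda>h. gradL x \<bullet> h) = (\<lambda>h. ?G \<bullet> h)"
    using grad[of x] has_derivative_unique by blast
  then have "gradL x \<bullet> (gradL x - ?G) = ?G \<bullet> (gradL x - ?G)"
    by (rule fun_cong)
  then have "(gradL x - ?G) \<bullet> (gradL x - ?G) = 0"
    by (simp only: inner_diff_left right_minus_eq)
  then show ?thesis by simp
qed

lemma char_scale:
  fixes f :: "'a \<Rightarrow> real"
  assumes [measurable]: "f \<in> borel_measurable N"
  shows "char (distr N borel (\<lambda>x. c * f x)) t = char (distr N borel f) (c * t)"
  by (simp add: char_def integral_distr ac_simps)

lemma distr_lborel_borel: "distr M lborel f = distr M borel f"
  by (simp add: distr_def)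

lemma char_normal:
  assumes s: "0 < \<sigma>"
  shows "char (density lborel (normal_density 0 \<sigma>)) t = complex_of_real (exp (- (\<sigma> * t)\<^sup>2 / 2))"
proof -
  interpret S: prob_space std_normal_distribution using prob_space_normal_density[of 1 0] by simp
  have "distributed std_normal_distribution lborel (\<lambda>x. x) std_normal_density"
    unfolding distributed_def by (simp add: distr_id2)
  then have "distributed std_normal_distribution lborel (\<lambda>x. 0 + \<sigma> * x) (normal_density (0 + \<sigma> * 0) (\<bar>\<sigma>\<bar> * 1))"
    using S.normal_density_affine[of "\<lambda>x. x" 0 1 \<sigma> 0] s by simp
  then have "distr std_normal_distribution lborel (\<lambda>x. \<sigma> * x) = density lborel (normal_density 0 \<sigma>)"
    using s by (simp add: distributed_distr_eq_density)
  then have "density lborel (normal_density 0 \<sigma>) = distr std_normal_distribution borel (\<lambda>x. \<sigma> * x)"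
    by (simp add: distr_lborel_borel)
  then have "char (density lborel (normal_density 0 \<sigma>)) t = char (distr std_normal_distribution borel (\<lambda>x. x)) (\<sigma> * t)"
    using char_scale[of "\<lambda>x. x" std_normal_distribution \<sigma> t] by simp
  also have "distr std_normal_distribution borel (\<lambda>x. x) = std_normal_distribution"
    by (simp add: distr_id2)
  finally show ?thesis by (simp add: char_std_normal_distribution)
qed

lemma (in prob_space) stationary_gauss:
  fixes X \<xi> :: "'a \<Rightarrow> real"
  assumes X_meas[measurable]: "X \<in> borel_measurable M"
    and xi: "distributed M lborel \<xi> (normal_density 0 s)"
    and ind: "indep_var borel X borel \<xi>"
    and st: "distr M borel (\<lambda>x. c * X x + \<xi> x) = distr M borel X"
    and c: "\<bar>c\<bar> < 1" and s: "0 < s"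
  shows "distr M borel X = density lborel (normal_density 0 (s / sqrt (1 - c\<^sup>2)))"
proof -
  have xi_meas[measurable]: "\<xi> \<in> borel_measurable M"
    using xi by (simp add: distributed_def)
  let ?\<mu> = "distr M borel X"
  define \<phi> where "\<phi> = char ?\<mu>"
  have rd: "real_distribution ?\<mu>" by simp
  have xid: "distr M borel \<xi> = density lborel (normal_density 0 s)"
    using xi by (simp add: distributed_distr_eq_density distr_lborel_borel[symmetric])
  have ic: "indep_var borel (\<lambda>x. c * X x) borel \<xi>"
  proof -
    have m: "(\<lambda>y. c * y) \<in> borel_measurable borel" by measurable
    show ?thesis
      using indep_var_compose[OF ind m measurable_ident] by (simp add: o_def)
  qed
  have step: "\<phi> t = \<phi> (c * t) * complex_of_real (exp (- (s * t)\<^sup>2 / 2))" for t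
  proof -
    have "char (distr M borel (\<lambda>x. c * X x + \<xi> x)) t = char (distr M borel (\<lambda>x. c * X x)) t * char (distr M borel \<xi>) t"
      by (rule char_distr_add[OF ic])
    also have "char (distr M borel (\<lambda>x. c * X x)) t = \<phi> (c * t)"
      unfolding \<phi>_def by (rule char_scale[OF X_meas])
    also have "char (distr M borel \<xi>) t = complex_of_real (exp (- (s * t)\<^sup>2 / 2))"
      unfolding xid by (rule char_normal[OF s])
    finally show ?thesis unfolding st \<phi>_def .
  qed
  have iter: "\<phi> t = \<phi> (c ^ n * t) * complex_of_real (exp (- (s * t)\<^sup>2 * (\<Sum>i<n. (c\<^sup>2) ^ i) / 2))" for n t
  proof (induction n)
    case 0 then show ?case by simp
  next
    case (Suc n)
    have a: "\<phi> (c ^ n * t) = \<phi> (c ^ Suc n * t) * complex_of_real (exp (- (s * (c ^ n * t))\<^sup>2 / 2))"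
      using step[of "c ^ n * t"] by (simp add: mult.assoc)
    have e: "- (s * (c ^ n * t))\<^sup>2 / 2 + - (s * t)\<^sup>2 * (\<Sum>i<n. (c\<^sup>2) ^ i) / 2
       = - (s * t)\<^sup>2 * (\<Sum>i<Suc n. (c\<^sup>2) ^ i) / 2"
    proof -
      have "(s * (c ^ n * t))\<^sup>2 = (s * t)\<^sup>2 * (c\<^sup>2) ^ n"
        by (simp add: power_mult_distrib power_mult[symmetric] mult.commute)
      then show ?thesis by (simp add: algebra_simps add_divide_distrib)
    qed
    have b: "exp (- (s * (c ^ n * t))\<^sup>2 / 2) * exp (- (s * t)\<^sup>2 * (\<Sum>i<n. (c\<^sup>2) ^ i) / 2)
       = exp (- (s * t)\<^sup>2 * (\<Sum>i<Suc n. (c\<^sup>2) ^ i) / 2)"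
      unfolding exp_add[symmetric] e ..
    have "\<phi> t = \<phi> (c ^ Suc n * t) * (complex_of_real (exp (- (s * (c ^ n * t))\<^sup>2 / 2))
         * complex_of_real (exp (- (s * t)\<^sup>2 * (\<Sum>i<n. (c\<^sup>2) ^ i) / 2)))"
      using Suc.IH a by (simp only: mult.assoc)
    also have "\<dots> = \<phi> (c ^ Suc n * t) * complex_of_real (exp (- (s * t)\<^sup>2 * (\<Sum>i<Suc n. (c\<^sup>2) ^ i) / 2))"
      unfolding of_real_mult[symmetric] b ..
    finally show ?case .
  qed
  have lim: "\<phi> t = complex_of_real (exp (- ((s / sqrt (1 - c\<^sup>2)) * t)\<^sup>2 / 2))" for t
  proof -
    have c2: "norm (c\<^sup>2) < 1" using c by (simp add: abs_square_less_1)
    have g: "(\<lambda>n. \<Sum>i<n. (c\<^sup>2) ^ i) \<longlonglongrightarrow> 1 / (1 - c\<^sup>2)"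
      using geometric_sums[OF c2] by (simp add: sums_def)
    have cn: "(\<lambda>n. c ^ n * t) \<longlonglongrightarrow> 0"
      using tendsto_mult_left_zero[OF LIMSEQ_power_zero[of c], of t] c by simp
    have "(\<lambda>n. \<phi> (c ^ n * t)) \<longlonglongrightarrow> \<phi> 0"
      using isCont_tendsto_compose[OF real_distribution.isCont_char[OF rd] cn] unfolding \<phi>_def .
    then have "(\<lambda>n. \<phi> (c ^ n * t)) \<longlonglongrightarrow> 1"
      unfolding \<phi>_def using real_distribution.char_zero[OF rd] by simp
    moreover have "(\<lambda>n. complex_of_real (exp (- (s * t)\<^sup>2 * (\<Sum>i<n. (c\<^sup>2) ^ i) / 2)))
        \<longlonglongrightarrow> complex_of_real (exp (- (s * t)\<^sup>2 * (1 / (1 - c\<^sup>2)) / 2))"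
      by (intro tendsto_intros g) auto
    ultimately have "(\<lambda>n. \<phi> (c ^ n * t) * complex_of_real (exp (- (s * t)\<^sup>2 * (\<Sum>i<n. (c\<^sup>2) ^ i) / 2)))
        \<longlonglongrightarrow> 1 * complex_of_real (exp (- (s * t)\<^sup>2 * (1 / (1 - c\<^sup>2)) / 2))"
      by (rule tendsto_mult)
    then have "(\<lambda>n. \<phi> t) \<longlonglongrightarrow> complex_of_real (exp (- (s * t)\<^sup>2 * (1 / (1 - c\<^sup>2)) / 2))"
      unfolding iter[symmetric] by simp
    then have "\<phi> t = complex_of_real (exp (- (s * t)\<^sup>2 * (1 / (1 - c\<^sup>2)) / 2))"
      by (simp add: LIMSEQ_const_iff)
    moreover have "1 - c\<^sup>2 > 0" using c2 by simp
    ultimately show ?thesis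
      by (simp add: power_mult_distrib power_divide)
  qed
  have pos: "s / sqrt (1 - c\<^sup>2) > 0" using c s by (simp add: abs_square_less_1)
  then have "char ?\<mu> = char (density lborel (normal_density 0 (s / sqrt (1 - c\<^sup>2))))"
    using lim char_normal unfolding \<phi>_def by (auto simp: fun_eq_iff)
  moreover have "real_distribution (density lborel (normal_density 0 (s / sqrt (1 - c\<^sup>2))))"
    using prob_space_normal_density[OF pos] by (auto simp: real_distribution_def real_distribution_axioms_def)
  ultimately show ?thesis
    using Levy_uniqueness[OF rd] by blast
qed

lemma mv_meas[measurable]:
  fixes f :: "'a \<Rightarrow> real^'n" and A :: "real^'n^'m"
  assumes "f \<in> borel_measurable N"
  shows "(\<lambda>x. A *v f x) \<in> borel_measurable N"
proof -
  have "(\<lambda>y. A *v y) \<in> borel_measurable borel"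
    by (intro borel_measurable_continuous_onI matrix_vector_mult_linear_continuous_on)
  from measurable_compose[OF assms this] show ?thesis .
qed

lemma (in prob_space) indep_var_cong_space:
  assumes ind: "indep_var N1 X N2 Y"
    and X: "\<And>x. x \<in> space M \<Longrightarrow> X' x = X x" and Y: "\<And>x. x \<in> space M \<Longrightarrow> Y' x = Y x"
  shows "indep_var N1 X' N2 Y'"
proof -
  have v: "case_bool X' Y' b -` A \<inter> space M = case_bool X Y b -` A \<inter> space M" for b A
    using X Y by (cases b) auto
  have m: "case_bool X' Y' b \<in> measurable M (case_bool N1 N2 b) \<longleftrightarrow> case_bool X Y b \<in> measurable M (case_bool N1 N2 b)" for b
    using X Y by (cases b) (auto intro!: measurable_cong)
  show ?thesis
    using ind unfolding indep_var_def indep_vars_def v m by simp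
qed

definition sqi :: "'a measure \<Rightarrow> ('a \<Rightarrow> real) \<Rightarrow> bool" where
  "sqi M f \<longleftrightarrow> f \<in> borel_measurable M \<and> integrable M (\<lambda>x. (f x)\<^sup>2)"

lemma sqi_mult: assumes "sqi M f" "sqi M g" shows "integrable M (\<lambda>x. f x * g x)"
proof (rule Bochner_Integration.integrable_bound)
  show "integrable M (\<lambda>x. (f x)\<^sup>2 + (g x)\<^sup>2)" using assms unfolding sqi_def by auto
  show "(\<lambda>x. f x * g x) \<in> borel_measurable M" using assms unfolding sqi_def by auto
  show "AE x in M. norm (f x * g x) \<le> norm ((f x)\<^sup>2 + (g x)\<^sup>2)"
  proof (rule AE_I2)
    fix x
    have "0 \<le> (\<bar>f x\<bar> - \<bar>g x\<bar>)\<^sup>2" by simp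
    then have "2 * \<bar>f x\<bar> * \<bar>g x\<bar> \<le> (f x)\<^sup>2 + (g x)\<^sup>2"
      by (simp add: power2_eq_square algebra_simps)
    moreover have "\<bar>f x\<bar> * \<bar>g x\<bar> \<ge> 0" by simp
    ultimately have "\<bar>f x\<bar> * \<bar>g x\<bar> \<le> (f x)\<^sup>2 + (g x)\<^sup>2" by linarith
    moreover have "norm (f x * g x) = \<bar>f x\<bar> * \<bar>g x\<bar>" by (simp add: abs_mult)
    moreover have "norm ((f x)\<^sup>2 + (g x)\<^sup>2) = (f x)\<^sup>2 + (g x)\<^sup>2" by simp
    ultimately show "norm (f x * g x) \<le> norm ((f x)\<^sup>2 + (g x)\<^sup>2)" by simp
  qed
qed

lemma sqi_add: assumes "sqi M f" "sqi M g" shows "sqi M (\<lambda>x. f x + g x)"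
proof -
  have e: "(\<lambda>x. (f x + g x)\<^sup>2) = (\<lambda>x. (f x)\<^sup>2 + 2 * (f x * g x) + (g x)\<^sup>2)"
    by (simp add: power2_eq_square algebra_simps)
  show ?thesis using assms sqi_mult[OF assms] unfolding sqi_def e by auto
qed

lemma sqi_cmult: assumes "sqi M f" shows "sqi M (\<lambda>x. c * f x)"
proof -
  have e: "(\<lambda>x. (c * f x)\<^sup>2) = (\<lambda>x. c\<^sup>2 * (f x)\<^sup>2)"
    by (simp add: power2_eq_square algebra_simps)
  show ?thesis using assms unfolding sqi_def e by auto
qed

lemma sqi_diff: assumes "sqi M f" "sqi M g" shows "sqi M (\<lambda>x. f x - g x)"
  using sqi_add[OF assms(1) sqi_cmult[OF assms(2), of "-1"]] by simp

lemma sqi_zero: "sqi M (\<lambda>x. 0)" unfolding sqi_def by simp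

lemma sqi_sum: assumes "\<And>i. i \<in> A \<Longrightarrow> sqi M (f i)" shows "sqi M (\<lambda>x. \<Sum>i\<in>A. f i x)"
  using assms
proof (induction A rule: infinite_finite_induct)
  case (infinite A) then show ?case by (simp add: sqi_zero)
next
  case empty then show ?case by (simp add: sqi_zero)
next
  case (insert a A) then show ?case by (simp add: sqi_add)
qed

lemma sqi_cong: assumes "sqi M f" "\<And>x. x \<in> space M \<Longrightarrow> g x = f x" shows "sqi M g"
proof -
  have "g \<in> borel_measurable M" using assms unfolding sqi_def by (metis measurable_cong)
  moreover have "integrable M (\<lambda>x. (g x)\<^sup>2)"
  proof -
    have "integrable M (\<lambda>x. (g x)\<^sup>2) = integrable M (\<lambda>x. (f x)\<^sup>2)"
      by (rule Bochner_Integration.integrable_cong) (auto simp: assms(2))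
    then show ?thesis using assms(1) unfolding sqi_def by simp
  qed
  ultimately show ?thesis unfolding sqi_def by simp
qed

lemma dist_sum:
  fixes f :: "nat \<Rightarrow> real"
  shows "(\<Sum>i<N. \<Sum>i'<N. f (if i \<le> i' then i' - i else i - i')) = real N * f 0 + 2 * (\<Sum>r=1..N-1. real (N - r) * f r)"
proof (induction N)
  case 0 then show ?case by simp
next
  case (Suc N)
  have rev: "(\<Sum>i<N. f (N - i)) = (\<Sum>r=1..N. f r)"
    by (rule sum.reindex_bij_witness[of _ "\<lambda>r. N - r" "\<lambda>i. N - i"]) auto
  have L: "(\<Sum>i<Suc N. \<Sum>i'<Suc N. f (if i \<le> i' then i' - i else i - i'))
     = (\<Sum>i<N. \<Sum>i'<N. f (if i \<le> i' then i' - i else i - i')) + 2 * (\<Sum>i<N. f (N - i)) + f 0"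
  proof -
    have a: "(\<Sum>i<N. f (if i \<le> N then N - i else i - N)) = (\<Sum>i<N. f (N - i))"
      by (rule sum.cong) auto
    have b: "(\<Sum>i'<N. f (if N \<le> i' then i' - N else N - i')) = (\<Sum>i<N. f (N - i))"
      by (rule sum.cong) auto
    show ?thesis by (simp add: sum.distrib a b)
  qed
  have R1: "(\<Sum>r=1..Suc N - 1. real (Suc N - r) * f r) = (\<Sum>r=1..N. real (N - r) * f r) + (\<Sum>r=1..N. f r)"
  proof -
    have "(\<Sum>r=1..N. real (Suc N - r) * f r) = (\<Sum>r=1..N. real (N - r) * f r + f r)"
      by (rule sum.cong) (auto simp: Suc_diff_le algebra_simps)
    then show ?thesis by (simp add: sum.distrib)
  qed
  have R2: "(\<Sum>r=1..N. real (N - r) * f r) = (\<Sum>r=1..N-1. real (N - r) * f r)"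
  proof (cases N)
    case 0 then show ?thesis by simp
  next
    case (Suc M)
    then have "{1..N} = insert N {1..N-1}" by auto
    then show ?thesis using Suc by simp
  qed
  show ?case unfolding L Suc.IH R1 R2[symmetric] rev by (simp add: algebra_simps)
qed

locale sgd = prob_space M for M :: "'w measure" +
  fixes v wstar :: "real^'n" and H :: "real^'n^'n"
    and l l' :: "real \<Rightarrow> real" and gradL :: "real^'n \<Rightarrow> real^'n"
    and lam :: "nat \<Rightarrow> real" and u :: "nat \<Rightarrow> real^'n"
    and mu LS eta muF sigma :: real
    and w g :: "nat \<Rightarrow> 'w \<Rightarrow> real^'n"
    and k0 :: nat
  assumes dim: "CARD('n) \<ge> 2"
    and unit_v: "norm v = 1"
    and l_d1: "\<And>x. (l has_real_derivative l' x) (at x)"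
    and H_sym: "transpose H = H"
    and H_PS: "H ** PS v = H" and PS_H: "PS v ** H = H"
    and mu_pos: "0 < mu" and mu_LS: "mu \<le> LS"
    and eig_orth: "\<And>i j. i \<in> {1..CARD('n)-1} \<Longrightarrow> j \<in> {1..CARD('n)-1} \<Longrightarrow>
                     u i \<bullet> u j = (if i = j then 1 else 0)"
    and eig_perp: "\<And>j. j \<in> {1..CARD('n)-1} \<Longrightarrow> u j \<bullet> v = 0"
    and eig_vec: "\<And>j. j \<in> {1..CARD('n)-1} \<Longrightarrow> H *v u j = lam j *\<^sub>R u j"
    and eig_range: "\<And>j. j \<in> {1..CARD('n)-1} \<Longrightarrow> mu \<le> lam j \<and> lam j \<le> LS"
    and grad: "\<And>x. (lossL l v H wstar has_derivative (\<lambda>h. gradL x \<bullet> h)) (at x)"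
    and eta_pos: "0 < eta" and eta_lt: "eta < 2 / LS"
    and sigma_pos: "0 < sigma"
    and w0_meas: "w 0 \<in> borel_measurable M"
    and sgd: "\<And>k x. x \<in> space M \<Longrightarrow>
                 w (Suc k) x = w k x - eta *\<^sub>R gradL (w k x) - (eta * muF) *\<^sub>R v + eta *\<^sub>R g k x"
    and indep: "indep_vars (\<lambda>_. borel)
                  (\<lambda>i. case i of None \<Rightarrow> w 0 | Some k \<Rightarrow> g k) UNIV"
    and g_gauss: "\<And>k a. PS v *v a \<noteq> 0 \<Longrightarrow>
                   distributed M lborel (\<lambda>x. a \<bullet> g k x)
                     (normal_density 0 (sigma * norm (PS v *v a)))"
    and stationary: "\<And>k. k \<ge> k0 \<Longrightarrow>
                   distr M borel (\<lambda>x. PS v *v (w k x - wstar)) = distr M borel (\<lambda>x. PS v *v (w k0 x - wstar))"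
begin


definition Ep :: "nat \<Rightarrow> 'w \<Rightarrow> real^'n" where
  "Ep k x = PS v *v (w k x - wstar)"

lemma vv: "v \<bullet> v = 1"
  using unit_v by (simp add: norm_eq_sqrt_inner)

lemma PSv: "PS v *v v = 0"
  by (simp add: PS_mult vv)

lemma Hv: "H *v v = 0"
  by (metis HPS_vec[OF H_PS] PSv matrix_vector_mult_0_right)

lemma PSu: "j \<in> {1..CARD('n)-1} \<Longrightarrow> PS v *v u j = u j"
  using eig_perp[of j] by (simp add: PS_mult inner_commute)

lemma norm_u: "j \<in> {1..CARD('n)-1} \<Longrightarrow> norm (u j) = 1"
  using eig_orth[of j j] by (simp add: norm_eq_sqrt_inner)

lemma g_meas[measurable]: "g k \<in> borel_measurable M"
  using indep unfolding indep_vars_def by (metis (no_types, lifting) UNIV_I option.simps(5))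

lemma gradL_eq: "gradL x = l' (v \<bullet> (x - wstar)) *\<^sub>R v + H *v (x - wstar)"
  by (rule grad_formula[OF l_d1 H_sym H_PS PS_H grad])

lemma Ep_Suc: "x \<in> space M \<Longrightarrow>
   Ep (Suc k) x = Ep k x - eta *\<^sub>R (H *v Ep k x) + eta *\<^sub>R (PS v *v g k x)"
proof -
  assume x: "x \<in> space M"
  have "w (Suc k) x - wstar = (w k x - wstar) - eta *\<^sub>R gradL (w k x) - (eta * muF) *\<^sub>R v + eta *\<^sub>R g k x"
    using sgd[OF x] by (simp add: algebra_simps)
  then have "Ep (Suc k) x = PS v *v (w k x - wstar) - eta *\<^sub>R (PS v *v gradL (w k x)) - (eta * muF) *\<^sub>R (PS v *v v) + eta *\<^sub>R (PS v *v g k x)"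
    unfolding Ep_def by (simp add: matrix_vector_mult_diff_distrib matrix_vector_right_distrib matrix_vector_mult_scaleR)
  also have "PS v *v gradL (w k x) = H *v Ep k x"
    unfolding gradL_eq Ep_def
    by (simp add: matrix_vector_right_distrib matrix_vector_mult_scaleR PSv HPS_vec[OF H_PS]
        matrix_vector_mul_assoc PS_H H_PS)
  finally show ?thesis by (simp add: PSv Ep_def)
qed

lemma Ep_meas[measurable]: "Ep k \<in> borel_measurable M"
proof (induction k)
  case 0
  show ?case unfolding Ep_def using w0_meas by measurable
next
  case (Suc k)
  have "(\<lambda>x. Ep k x - eta *\<^sub>R (H *v Ep k x) + eta *\<^sub>R (PS v *v g k x)) \<in> borel_measurable M"
    using Suc by measurable
  then show ?case
    by (subst measurable_cong[where g="\<lambda>x. Ep k x - eta *\<^sub>R (H *v Ep k x) + eta *\<^sub>R (PS v *v g k x)"])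
       (simp_all add: Ep_Suc)
qed

definition cc :: "nat \<Rightarrow> real" where "cc j = 1 - eta * lam j"
definition bp :: "nat \<Rightarrow> nat \<Rightarrow> 'w \<Rightarrow> real" where "bp j k x = u j \<bullet> Ep k x"
definition xi :: "nat \<Rightarrow> nat \<Rightarrow> 'w \<Rightarrow> real" where "xi j k x = eta * (u j \<bullet> g k x)"

lemma LS_pos: "0 < LS" using mu_pos mu_LS by simp

lemma cc_abs: assumes j: "j \<in> {1..CARD('n)-1}" shows "\<bar>cc j\<bar> < 1"
proof -
  have l: "0 < lam j" "lam j \<le> LS" using eig_range[OF j] mu_pos by auto
  have "eta * LS < 2" using eta_lt LS_pos by (simp add: field_simps)
  moreover have "eta * lam j \<le> eta * LS" using l eta_pos by (simp add: mult_left_mono)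
  moreover have "0 < eta * lam j" using l eta_pos by simp
  ultimately show ?thesis unfolding cc_def by linarith
qed

lemma bp_meas[measurable]: "bp j k \<in> borel_measurable M"
  unfolding bp_def[abs_def] by measurable

lemma xi_meas[measurable]: "xi j k \<in> borel_measurable M"
  unfolding xi_def[abs_def] by measurable

lemma bp_Suc: assumes x: "x \<in> space M" and j: "j \<in> {1..CARD('n)-1}"
  shows "bp j (Suc k) x = cc j * bp j k x + xi j k x"
proof -
  have 1: "u j \<bullet> (H *v Ep k x) = lam j * (u j \<bullet> Ep k x)"
    using sym_mat[OF H_sym, of "u j" "Ep k x", symmetric] eig_vec[OF j] by simp
  have 2: "u j \<bullet> (PS v *v g k x) = u j \<bullet> g k x"
    using PS_sym[of v "u j" "g k x", symmetric] PSu[OF j] by simp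
  show ?thesis
    unfolding bp_def xi_def cc_def Ep_Suc[OF x]
    by (simp add: inner_diff_right inner_add_right 1 2 algebra_simps)
qed

lemma bp_closed: assumes x: "x \<in> space M" and j: "j \<in> {1..CARD('n)-1}"
  shows "bp j k x = cc j ^ k * bp j 0 x + (\<Sum>i<k. cc j ^ (k - 1 - i) * xi j i x)"
proof (induction k)
  case 0 then show ?case by simp
next
  case (Suc k)
  have "(\<Sum>i<Suc k. cc j ^ (Suc k - 1 - i) * xi j i x) = cc j * (\<Sum>i<k. cc j ^ (k - 1 - i) * xi j i x) + xi j k x"
  proof -
    have "(\<Sum>i<k. cc j ^ (Suc k - 1 - i) * xi j i x) = (\<Sum>i<k. cc j * (cc j ^ (k - 1 - i) * xi j i x))"
    proof (rule sum.cong)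
      fix i assume "i \<in> {..<k}"
      then have "Suc k - 1 - i = Suc (k - 1 - i)" by auto
      then show "cc j ^ (Suc k - 1 - i) * xi j i x = cc j * (cc j ^ (k - 1 - i) * xi j i x)" by simp
    qed simp
    then show ?thesis by (simp add: sum_distrib_left)
  qed
  then show ?case using Suc bp_Suc[OF x j, of k] by (simp add: algebra_simps)
qed

lemma indep_bp_xi: assumes j: "j \<in> {1..CARD('n)-1}" and km: "k \<le> m"
  shows "indep_var borel (bp j k) borel (xi j m)"
proof -
  define Y where "Y = (\<lambda>i. case i of None \<Rightarrow> w 0 | Some k \<Rightarrow> g k)"
  define A where "A = insert None (Some ` {..<k})"
  define B where "B = {Some m}"
  have AB: "A \<inter> B = {}" using km unfolding A_def B_def by auto
  have ind: "indep_var (PiM A (\<lambda>_. borel)) (\<lambda>\<omega>. restrict (\<lambda>i. Y i \<omega>) A) (PiM B (\<lambda>_. borel)) (\<lambda>\<omega>. restrict (\<lambda>i. Y i \<omega>) B)"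
    by (rule indep_var_restrict[OF indep[folded Y_def] AB]) auto
  define F where "F = (\<lambda>f. cc j ^ k * (u j \<bullet> (PS v *v (f None - wstar))) + (\<Sum>i<k. cc j ^ (k - 1 - i) * (eta * (u j \<bullet> f (Some i)))))"
  define G where "G = (\<lambda>f. eta * (u j \<bullet> f (Some m)))"
  have Fm: "F \<in> borel_measurable (PiM A (\<lambda>_. borel :: (real^'n) measure))"
    unfolding F_def A_def by measurable
  have Gm: "G \<in> borel_measurable (PiM B (\<lambda>_. borel :: (real^'n) measure))"
    unfolding G_def B_def by measurable
  have "indep_var borel (F \<circ> (\<lambda>\<omega>. restrict (\<lambda>i. Y i \<omega>) A)) borel (G \<circ> (\<lambda>\<omega>. restrict (\<lambda>i. Y i \<omega>) B))"
    by (rule indep_var_compose[OF ind Fm Gm])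
  then show ?thesis
  proof (rule indep_var_cong_space)
    fix x assume x: "x \<in> space M"
    show "bp j k x = (F \<circ> (\<lambda>\<omega>. restrict (\<lambda>i. Y i \<omega>) A)) x"
      by (subst bp_closed[OF x j]) (simp add: F_def A_def Y_def xi_def bp_def Ep_def)
    show "xi j m x = (G \<circ> (\<lambda>\<omega>. restrict (\<lambda>i. Y i \<omega>) B)) x"
      by (simp add: G_def B_def Y_def xi_def)
  qed
qed

definition tau :: "nat \<Rightarrow> real" where "tau j = eta * sigma / sqrt (1 - (cc j)\<^sup>2)"

lemma tau_pos: assumes j: "j \<in> {1..CARD('n)-1}" shows "0 < tau j"
proof -
  have "(cc j)\<^sup>2 < 1" using cc_abs[OF j] by (simp add: abs_square_less_1)
  then show ?thesis unfolding tau_def using eta_pos sigma_pos by simp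
qed

lemma tau_sq: assumes j: "j \<in> {1..CARD('n)-1}"
  shows "(tau j)\<^sup>2 = eta * sigma\<^sup>2 / (2 * lam j - eta * (lam j)\<^sup>2)"
proof -
  have c: "(cc j)\<^sup>2 < 1" using cc_abs[OF j] by (simp add: abs_square_less_1)
  have l: "0 < lam j" using eig_range[OF j] mu_pos by auto
  have e: "1 - (cc j)\<^sup>2 = eta * (2 * lam j - eta * (lam j)\<^sup>2)"
    unfolding cc_def by (simp add: power2_eq_square algebra_simps)
  have "(tau j)\<^sup>2 = (eta * sigma)\<^sup>2 / (1 - (cc j)\<^sup>2)"
    unfolding tau_def using c by (simp add: power_divide)
  also have "\<dots> = eta * sigma\<^sup>2 / (2 * lam j - eta * (lam j)\<^sup>2)"
    unfolding e using eta_pos by (simp add: power2_eq_square)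
  finally show ?thesis .
qed

lemma xi_dist: assumes j: "j \<in> {1..CARD('n)-1}"
  shows "distributed M lborel (xi j k) (normal_density 0 (eta * sigma))"
proof -
  have "PS v *v u j \<noteq> 0" using PSu[OF j] norm_u[OF j] by auto
  from g_gauss[OF this, of k]
  have "distributed M lborel (\<lambda>x. u j \<bullet> g k x) (normal_density 0 sigma)"
    using PSu[OF j] norm_u[OF j] by simp
  from normal_density_affine[OF this sigma_pos, of eta 0]
  show ?thesis using eta_pos unfolding xi_def[abs_def] by simp
qed

lemma xi_mean: assumes j: "j \<in> {1..CARD('n)-1}"
  shows "integrable M (xi j k)" "expectation (xi j k) = 0"
proof -
  have D: "distributed M lborel (xi j k) (normal_density 0 (eta * sigma))" by (rule xi_dist[OF j])
  have p: "0 < eta * sigma" using eta_pos sigma_pos by simp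
  show "expectation (xi j k) = 0"
    by (rule normal_distributed_expectation[OF p D])
  have "integrable lborel (\<lambda>x. normal_density 0 (eta * sigma) x * x)"
    by (rule integrable_normal_moment_nz_1) (rule p)
  then show "integrable M (xi j k)"
    using distributed_integrable[OF D, of "\<lambda>x. x"] by simp
qed

lemma bp_stat: assumes k: "k0 \<le> k"
  shows "distr M borel (bp j k) = distr M borel (bp j k0)"
proof -
  have m: "(\<lambda>y. u j \<bullet> y) \<in> borel_measurable (borel :: (real^'n) measure)" by measurable
  have "distr M borel (bp j k) = distr (distr M borel (Ep k)) borel (\<lambda>y. u j \<bullet> y)"
    by (subst distr_distr[OF m]) (simp_all add: bp_def[abs_def] o_def)
  also have "distr M borel (Ep k) = distr M borel (Ep k0)"
    unfolding Ep_def[abs_def] using stationary[OF k] .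
  also have "distr (distr M borel (Ep k0)) borel (\<lambda>y. u j \<bullet> y) = distr M borel (bp j k0)"
    by (subst distr_distr[OF m]) (simp_all add: bp_def[abs_def] o_def)
  finally show ?thesis .
qed

lemma bp_gauss: assumes j: "j \<in> {1..CARD('n)-1}" and k: "k0 \<le> k"
  shows "distributed M lborel (bp j k) (normal_density 0 (tau j))"
proof -
  have st: "distr M borel (\<lambda>x. cc j * bp j k x + xi j k x) = distr M borel (bp j k)"
  proof -
    have "distr M borel (\<lambda>x. cc j * bp j k x + xi j k x) = distr M borel (bp j (Suc k))"
      by (rule distr_cong) (simp_all add: bp_Suc[OF _ j])
    also have "\<dots> = distr M borel (bp j k)"
      using bp_stat[of "Suc k" j] bp_stat[OF k, of j] k by simp
    finally show ?thesis .
  qed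
  have p: "0 < eta * sigma" using eta_pos sigma_pos by simp
  have "distr M borel (bp j k) = density lborel (normal_density 0 (eta * sigma / sqrt (1 - (cc j)\<^sup>2)))"
    by (rule stationary_gauss[OF bp_meas xi_dist[OF j] indep_bp_xi[OF j order_refl] st cc_abs[OF j] p])
  then show ?thesis
    unfolding distributed_def tau_def[symmetric] by (simp add: distr_lborel_borel)
qed

lemma bp_sq: assumes j: "j \<in> {1..CARD('n)-1}" and k: "k0 \<le> k"
  shows "integrable M (\<lambda>x. (bp j k x)\<^sup>2)" "(\<integral>x. (bp j k x)\<^sup>2 \<partial>M) = (tau j)\<^sup>2"
proof -
  note D = bp_gauss[OF j k]
  have t: "0 < tau j" by (rule tau_pos[OF j])
  have "integrable lborel (\<lambda>x. normal_density 0 (tau j) x * (x - 0) ^ 2)"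
    by (rule integrable_normal_moment) (rule t)
  then show "integrable M (\<lambda>x. (bp j k x)\<^sup>2)"
    using distributed_integrable[OF D, of "\<lambda>x. x\<^sup>2"] by simp
  have "(\<integral>x. (bp j k x)\<^sup>2 \<partial>M) = (\<integral>x. normal_density 0 (tau j) x * x\<^sup>2 \<partial>lborel)"
    using distributed_integral[OF D, of "\<lambda>x. x\<^sup>2"] by simp
  also have "\<dots> = (\<integral>x. normal_density 0 (tau j) x * (x - 0) ^ (2 * 1) \<partial>lborel)"
    by simp
  also have "\<dots> = fact (2 * 1) / ((2 / (tau j)\<^sup>2) ^ 1 * fact 1)"
    by (rule integral_normal_moment_even) (rule t)
  also have "\<dots> = (tau j)\<^sup>2" using t by simp
  finally show "(\<integral>x. (bp j k x)\<^sup>2 \<partial>M) = (tau j)\<^sup>2" .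
qed

lemma bp_sqi: assumes j: "j \<in> {1..CARD('n)-1}" and k: "k0 \<le> k" shows "sqi M (bp j k)"
  unfolding sqi_def using bp_sq[OF j k] by simp

lemma const_sqi: "sqi M (\<lambda>x. 1)" unfolding sqi_def by simp

lemma bp_int: assumes j: "j \<in> {1..CARD('n)-1}" and k: "k0 \<le> k" shows "integrable M (bp j k)"
  using sqi_mult[OF bp_sqi[OF j k] const_sqi] by simp

lemma bp_cov: assumes j: "j \<in> {1..CARD('n)-1}" and k: "k0 \<le> k"
  shows "(\<integral>x. bp j k x * bp j (k + m) x \<partial>M) = cc j ^ m * (tau j)\<^sup>2"
proof (induction m)
  case 0 then show ?case using bp_sq[OF j k] by (simp add: power2_eq_square)
next
  case (Suc m)
  have km: "k0 \<le> k + m" using k by simp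
  have i1: "integrable M (\<lambda>x. bp j k x * bp j (k + m) x)"
    by (rule sqi_mult[OF bp_sqi[OF j k] bp_sqi[OF j km]])
  have ind: "indep_var borel (bp j k) borel (xi j (k + m))"
    by (rule indep_bp_xi[OF j]) simp
  have i2: "integrable M (\<lambda>x. bp j k x * xi j (k + m) x)"
    by (rule indep_var_integrable[OF ind bp_int[OF j k] xi_mean(1)[OF j]])
  have "(\<integral>x. bp j k x * bp j (k + Suc m) x \<partial>M) = (\<integral>x. cc j * (bp j k x * bp j (k + m) x) + bp j k x * xi j (k + m) x \<partial>M)"
    by (rule Bochner_Integration.integral_cong) (simp_all add: bp_Suc[OF _ j] algebra_simps)
  also have "\<dots> = cc j * (\<integral>x. bp j k x * bp j (k + m) x \<partial>M) + (\<integral>x. bp j k x * xi j (k + m) x \<partial>M)"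
    using i1 i2 by simp
  also have "(\<integral>x. bp j k x * xi j (k + m) x \<partial>M) = 0"
    using indep_var_lebesgue_integral[OF ind bp_int[OF j k] xi_mean(1)[OF j]] xi_mean(2)[OF j] by simp
  finally show ?case using Suc by simp
qed

lemma bp_cov2: assumes j: "j \<in> {1..CARD('n)-1}" and k: "k0 \<le> k" and k': "k0 \<le> k'"
  shows "(\<integral>x. bp j k x * bp j k' x \<partial>M) = cc j ^ (if k \<le> k' then k' - k else k - k') * (tau j)\<^sup>2"
proof (cases "k \<le> k'")
  case True
  then show ?thesis using bp_cov[OF j k, of "k' - k"] by simp
next
  case False
  then show ?thesis using bp_cov[OF j k', of "k - k'"] by (simp add: mult.commute)
qed

end

lemma sqi_inner:
  fixes Q :: "'w \<Rightarrow> real^'n"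
  assumes "\<And>i. sqi M (\<lambda>\<omega>. Q \<omega> $ i)"
  shows "sqi M (\<lambda>\<omega>. x \<bullet> Q \<omega>)"
  unfolding inner_vec_def inner_real_def by (intro sqi_sum) (rule sqi_cmult[OF assms])

lemma sigma_bilinear:
  fixes Q :: "nat \<Rightarrow> 'w \<Rightarrow> real^'n" and K :: nat
  assumes sq: "\<And>s i. s < K \<Longrightarrow> sqi M (\<lambda>\<omega>. Q s \<omega> $ i)"
  defines "Sg \<equiv> (\<chi> i j. (1 / real K) * (\<Sum>s<K. integral\<^sup>L M (\<lambda>\<omega>. Q s \<omega> $ i * Q s \<omega> $ j)))"
  shows "x \<bullet> (Sg *v y) = (1 / real K) * (\<Sum>s<K. integral\<^sup>L M (\<lambda>\<omega>. (x \<bullet> Q s \<omega>) * (y \<bullet> Q s \<omega>)))"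
proof -
  have E: "integral\<^sup>L M (\<lambda>\<omega>. (x \<bullet> Q s \<omega>) * (y \<bullet> Q s \<omega>)) =
      (\<Sum>i\<in>UNIV. \<Sum>j\<in>UNIV. x$i * y$j * integral\<^sup>L M (\<lambda>\<omega>. Q s \<omega> $ i * Q s \<omega> $ j))" if s: "s < K" for s
  proof -
    have "(\<lambda>\<omega>. (x \<bullet> Q s \<omega>) * (y \<bullet> Q s \<omega>)) = (\<lambda>\<omega>. \<Sum>i\<in>UNIV. \<Sum>j\<in>UNIV. x$i * y$j * (Q s \<omega> $ i * Q s \<omega> $ j))"
      by (simp add: inner_vec_def sum_product algebra_simps)
    moreover have "integrable M (\<lambda>\<omega>. Q s \<omega> $ i * Q s \<omega> $ j)" for i j
      by (rule sqi_mult[OF sq[OF s] sq[OF s]])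
    ultimately show ?thesis by simp
  qed
  have "x \<bullet> (Sg *v y) = (\<Sum>i\<in>UNIV. \<Sum>j\<in>UNIV. x$i * y$j * ((1 / real K) * (\<Sum>s<K. integral\<^sup>L M (\<lambda>\<omega>. Q s \<omega> $ i * Q s \<omega> $ j))))"
    by (simp add: inner_vec_def matrix_vector_mult_def Sg_def sum_distrib_left algebra_simps)
  also have "\<dots> = (1 / real K) * (\<Sum>s<K. \<Sum>i\<in>UNIV. \<Sum>j\<in>UNIV. x$i * y$j * integral\<^sup>L M (\<lambda>\<omega>. Q s \<omega> $ i * Q s \<omega> $ j))"
  proof -
    have "(\<Sum>i\<in>UNIV. \<Sum>j\<in>UNIV. x$i * y$j * ((1 / real K) * (\<Sum>s<K. integral\<^sup>L M (\<lambda>\<omega>. Q s \<omega> $ i * Q s \<omega> $ j))))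
      = (1 / real K) * (\<Sum>i\<in>UNIV. \<Sum>j\<in>UNIV. \<Sum>s<K. x$i * y$j * integral\<^sup>L M (\<lambda>\<omega>. Q s \<omega> $ i * Q s \<omega> $ j))"
      by (simp add: sum_distrib_left algebra_simps)
    also have "(\<Sum>i\<in>UNIV. \<Sum>j\<in>UNIV. \<Sum>s<K. x$i * y$j * integral\<^sup>L M (\<lambda>\<omega>. Q s \<omega> $ i * Q s \<omega> $ j))
      = (\<Sum>s<K. \<Sum>i\<in>UNIV. \<Sum>j\<in>UNIV. x$i * y$j * integral\<^sup>L M (\<lambda>\<omega>. Q s \<omega> $ i * Q s \<omega> $ j))"
      by (simp add: sum.swap[of _ UNIV "{..<K}"])
    finally show ?thesis .
  qed
  also have "\<dots> = (1 / real K) * (\<Sum>s<K. integral\<^sup>L M (\<lambda>\<omega>. (x \<bullet> Q s \<omega>) * (y \<bullet> Q s \<omega>)))"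
    using E by simp
  finally show ?thesis .
qed

lemma norm_sq_vec: "(norm (y::real^'n))\<^sup>2 = (\<Sum>i\<in>UNIV. y $ i * y $ i)"
proof -
  have "(norm y)\<^sup>2 = y \<bullet> y" by (rule power2_norm_eq_inner)
  also have "\<dots> = (\<Sum>i\<in>UNIV. y $ i * y $ i)" by (simp add: inner_vec_def)
  finally show ?thesis .
qed

lemma sigma_trace:
  fixes Q :: "nat \<Rightarrow> 'w \<Rightarrow> real^'n" and K :: nat
  assumes sq: "\<And>s i. s < K \<Longrightarrow> sqi M (\<lambda>\<omega>. Q s \<omega> $ i)"
  defines "Sg \<equiv> (\<chi> i j. (1 / real K) * (\<Sum>s<K. integral\<^sup>L M (\<lambda>\<omega>. Q s \<omega> $ i * Q s \<omega> $ j)))"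
  shows "trace Sg = (1 / real K) * (\<Sum>s<K. integral\<^sup>L M (\<lambda>\<omega>. (norm (Q s \<omega>))\<^sup>2))"
    and "\<And>s. s < K \<Longrightarrow> integrable M (\<lambda>\<omega>. (norm (Q s \<omega>))\<^sup>2)"
proof -
  have I: "integrable M (\<lambda>\<omega>. Q s \<omega> $ i * Q s \<omega> $ i)" if "s < K" for s i
    by (rule sqi_mult[OF sq[OF that] sq[OF that]])
  show "integrable M (\<lambda>\<omega>. (norm (Q s \<omega>))\<^sup>2)" if "s < K" for s
    unfolding norm_sq_vec using I[OF that] by simp
  have "trace Sg = (\<Sum>i\<in>UNIV. (1 / real K) * (\<Sum>s<K. integral\<^sup>L M (\<lambda>\<omega>. Q s \<omega> $ i * Q s \<omega> $ i)))"
    by (simp add: trace_def Sg_def)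
  also have "\<dots> = (1 / real K) * (\<Sum>s<K. \<Sum>i\<in>UNIV. integral\<^sup>L M (\<lambda>\<omega>. Q s \<omega> $ i * Q s \<omega> $ i))"
    by (simp add: sum_distrib_left sum.swap[of _ UNIV "{..<K}"])
  also have "\<dots> = (1 / real K) * (\<Sum>s<K. integral\<^sup>L M (\<lambda>\<omega>. (norm (Q s \<omega>))\<^sup>2))"
    unfolding norm_sq_vec using I by simp
  finally show "trace Sg = (1 / real K) * (\<Sum>s<K. integral\<^sup>L M (\<lambda>\<omega>. (norm (Q s \<omega>))\<^sup>2))" .
qed

lemma sigma_lambda_max:
  fixes Q :: "nat \<Rightarrow> 'w \<Rightarrow> real^'n" and K :: nat and v :: "real^'n"
  assumes sq: "\<And>s i. s < K \<Longrightarrow> sqi M (\<lambda>\<omega>. Q s \<omega> $ i)"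
    and K: "K \<ge> 1"
  defines "Sg \<equiv> (\<chi> i j. (1 / real K) * (\<Sum>s<K. integral\<^sup>L M (\<lambda>\<omega>. Q s \<omega> $ i * Q s \<omega> $ j)))"
  assumes v: "v \<noteq> 0" "Sg *v v = 0"
  shows "lambda_max Sg \<le> trace Sg"
proof -
  note bil = sigma_bilinear[where Q=Q and K=K and M=M, OF sq, folded Sg_def]
  note tr = sigma_trace[where Q=Q and K=K and M=M, OF sq, folded Sg_def]
  define S where "S = {c. \<exists>x. x \<noteq> 0 \<and> Sg *v x = c *\<^sub>R x}"
  have symm: "(Sg *v x) \<bullet> y = x \<bullet> (Sg *v y)" for x y
    using bil[where x=y and y=x] bil[where x=x and y=y] by (simp add: inner_commute mult.commute)
  have "0 \<in> S" unfolding S_def using v by auto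
  have bound: "c \<le> trace Sg" if "c \<in> S" for c
  proof -
    obtain x where x: "x \<noteq> 0" "Sg *v x = c *\<^sub>R x" using \<open>c \<in> S\<close> unfolding S_def by auto
    have sx: "s < K \<Longrightarrow> sqi M (\<lambda>\<omega>. x \<bullet> Q s \<omega>)" for s by (rule sqi_inner[OF sq])
    have "c * (norm x)\<^sup>2 = x \<bullet> (Sg *v x)" using x by (simp add: power2_norm_eq_inner)
    also have "\<dots> = (1 / real K) * (\<Sum>s<K. integral\<^sup>L M (\<lambda>\<omega>. (x \<bullet> Q s \<omega>) * (x \<bullet> Q s \<omega>)))" by (rule bil)
    also have "\<dots> \<le> (1 / real K) * (\<Sum>s<K. integral\<^sup>L M (\<lambda>\<omega>. (norm x)\<^sup>2 * (norm (Q s \<omega>))\<^sup>2))"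
    proof (intro mult_left_mono sum_mono integral_mono)
      fix s assume s: "s \<in> {..<K}"
      show "integrable M (\<lambda>\<omega>. (x \<bullet> Q s \<omega>) * (x \<bullet> Q s \<omega>))" using sqi_mult[OF sx sx] s by simp
      show "integrable M (\<lambda>\<omega>. (norm x)\<^sup>2 * (norm (Q s \<omega>))\<^sup>2)" using tr(2)[of s] s by simp
      fix \<omega>
      have "\<bar>x \<bullet> Q s \<omega>\<bar> \<le> norm x * norm (Q s \<omega>)" by (rule Cauchy_Schwarz_ineq2)
      then have "\<bar>x \<bullet> Q s \<omega>\<bar>\<^sup>2 \<le> (norm x * norm (Q s \<omega>))\<^sup>2"
        by (rule power_mono) simp
      then show "(x \<bullet> Q s \<omega>) * (x \<bullet> Q s \<omega>) \<le> (norm x)\<^sup>2 * (norm (Q s \<omega>))\<^sup>2"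
        by (simp add: power2_eq_square power_mult_distrib ac_simps)
    qed simp
    also have "\<dots> = (norm x)\<^sup>2 * ((1 / real K) * (\<Sum>s<K. integral\<^sup>L M (\<lambda>\<omega>. (norm (Q s \<omega>))\<^sup>2)))"
      by (simp add: sum_distrib_left)
    also have "\<dots> = (norm x)\<^sup>2 * trace Sg"
      using tr(1) by simp
    finally have "c * (norm x)\<^sup>2 \<le> (norm x)\<^sup>2 * trace Sg" .
    moreover have "(norm x)\<^sup>2 > 0" using x by simp
    ultimately show ?thesis by (simp add: mult.commute)
  qed
  define f where "f c = (SOME x. x \<noteq> 0 \<and> Sg *v x = c *\<^sub>R x)" for c
  have fS: "f c \<noteq> 0 \<and> Sg *v f c = c *\<^sub>R f c" if "c \<in> S" for c
  proof -
    have "\<exists>x. x \<noteq> 0 \<and> Sg *v x = c *\<^sub>R x" using that unfolding S_def by simp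
    then show ?thesis unfolding f_def by (rule someI_ex)
  qed
  have inj: "inj_on f S"
  proof (rule inj_onI)
    fix c c' assume c: "c \<in> S" "c' \<in> S" "f c = f c'"
    have "c *\<^sub>R f c = Sg *v f c" using fS[OF c(1)] by simp
    also have "\<dots> = Sg *v f c'" using c(3) by simp
    also have "\<dots> = c' *\<^sub>R f c'" using fS[OF c(2)] by simp
    also have "\<dots> = c' *\<^sub>R f c" using c(3) by simp
    finally have "c *\<^sub>R f c = c' *\<^sub>R f c" .
    moreover have "f c \<noteq> 0" using fS[OF c(1)] by simp
    ultimately show "c = c'" by (simp add: scaleR_cancel_right)
  qed
  have po: "pairwise orthogonal (f ` S)"
  proof (rule pairwiseI)
    fix x y assume xy: "x \<in> f ` S" "y \<in> f ` S" "x \<noteq> y"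
    then obtain c c' where c: "c \<in> S" "c' \<in> S" "x = f c" "y = f c'" by auto
    then have cc: "c \<noteq> c'" using xy(3) by blast
    have "c * (x \<bullet> y) = (Sg *v x) \<bullet> y" using fS[OF c(1)] c by simp
    also have "\<dots> = x \<bullet> (Sg *v y)" by (rule symm)
    also have "\<dots> = c' * (x \<bullet> y)" using fS[OF c(2)] c by simp
    finally have "(c - c') * (x \<bullet> y) = 0" by (simp add: algebra_simps)
    then show "orthogonal x y" using cc by (simp add: orthogonal_def)
  qed
  have "0 \<notin> f ` S"
  proof
    assume "0 \<in> f ` S"
    then obtain c where c: "c \<in> S" "0 = f c" by blast
    then show False using fS[OF c(1)] by simp
  qed
  then have "independent (f ` S)" by (rule pairwise_orthogonal_independent[OF po])
  then have "finite (f ` S)" by (rule finiteI_independent)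
  then have fin: "finite S" using finite_imageD inj by blast
  have "Max S \<le> trace Sg"
  proof -
    have ne: "S \<noteq> {}" using \<open>0 \<in> S\<close> by blast
    show ?thesis unfolding Max_le_iff[OF fin ne] using bound by blast
  qed
  then show ?thesis unfolding lambda_max_def S_def .
qed

lemma centered_sum_le:
  fixes e :: "nat \<Rightarrow> 'a::real_inner" and K :: nat
  assumes K: "K \<ge> 1"
  shows "(\<Sum>s<K. (norm (e s - (1 / real K) *\<^sub>R (\<Sum>r<K. e r)))\<^sup>2) \<le> (\<Sum>s<K. (norm (e s))\<^sup>2)"
proof -
  define m where "m = (1 / real K) *\<^sub>R (\<Sum>r<K. e r)"
  have sm: "(\<Sum>r<K. e r) = real K *\<^sub>R m" unfolding m_def using K by simp
  have each: "(norm (e s - m))\<^sup>2 = (norm (e s))\<^sup>2 - 2 * (e s \<bullet> m) + (norm m)\<^sup>2" for s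
    by (simp add: power2_norm_eq_inner inner_diff_left inner_diff_right inner_commute)
  have "(\<Sum>s<K. (norm (e s - m))\<^sup>2) = (\<Sum>s<K. (norm (e s))\<^sup>2) - 2 * ((\<Sum>s<K. e s) \<bullet> m) + real K * (norm m)\<^sup>2"
    unfolding each by (simp add: sum.distrib sum_subtractf inner_sum_left sum_distrib_left)
  also have "(\<Sum>s<K. e s) \<bullet> m = real K * (norm m)\<^sup>2" unfolding sm by (simp add: power2_norm_eq_inner)
  finally have "(\<Sum>s<K. (norm (e s - m))\<^sup>2) = (\<Sum>s<K. (norm (e s))\<^sup>2) - real K * (norm m)\<^sup>2" by simp
  moreover have "real K * (norm m)\<^sup>2 \<ge> 0" by simp
  ultimately show ?thesis unfolding m_def by linarith
qed

context sgd begin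

lemma u_inj: "inj_on u {1..CARD('n)-1}"
proof (rule inj_onI)
  fix i j assume ij: "i \<in> {1..CARD('n)-1}" "j \<in> {1..CARD('n)-1}" "u i = u j"
  then have "u i \<bullet> u j = 1" using eig_orth[of j j] by simp
  then show "i = j" using eig_orth[OF ij(1,2)] by (simp split: if_splits)
qed

lemma expand: assumes y: "v \<bullet> y = 0"
  shows "y = (\<Sum>j\<in>{1..CARD('n)-1}. (u j \<bullet> y) *\<^sub>R u j)"
proof -
  define B where "B = insert v (u ` {1..CARD('n)-1})"
  have vnot: "v \<notin> u ` {1..CARD('n)-1}"
  proof
    assume "v \<in> u ` {1..CARD('n)-1}"
    then obtain j where "j \<in> {1..CARD('n)-1}" "v = u j" by auto
    then show False using eig_perp[of j] vv by simp
  qed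
  have fin: "finite B" unfolding B_def by simp
  have n1: "\<And>b. b \<in> B \<Longrightarrow> norm b = 1" unfolding B_def using unit_v norm_u by auto
  have po: "pairwise orthogonal B"
  proof (rule pairwiseI)
    fix x y assume xy: "x \<in> B" "y \<in> B" "x \<noteq> y"
    show "orthogonal x y"
    proof (cases "x = v")
      case True
      then obtain j where "j \<in> {1..CARD('n)-1}" "y = u j" using xy unfolding B_def by auto
      then show ?thesis using True eig_perp by (simp add: orthogonal_def inner_commute)
    next
      case False
      then obtain i where i: "i \<in> {1..CARD('n)-1}" "x = u i" using xy unfolding B_def by auto
      show ?thesis
      proof (cases "y = v")
        case True then show ?thesis using i eig_perp by (simp add: orthogonal_def)
      next
        case False
        then obtain j where j: "j \<in> {1..CARD('n)-1}" "y = u j" using xy unfolding B_def by auto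
        then have "i \<noteq> j" using i xy by auto
        then show ?thesis using eig_orth[OF i(1) j(1)] i j by (simp add: orthogonal_def)
      qed
    qed
  qed
  have "0 \<notin> B" using n1 by force
  then have ind: "independent B" by (rule pairwise_orthogonal_independent[OF po])
  have "card B = CARD('n)"
  proof -
    have "card (u ` {1..CARD('n)-1}) = CARD('n) - 1"
      using card_image[OF u_inj] by simp
    then show ?thesis unfolding B_def using vnot fin dim by (simp add: B_def)
  qed
  then have "dim (UNIV :: (real^'n) set) \<le> card B" by simp
  then have "UNIV \<subseteq> span B" by (rule card_ge_dim_independent[OF subset_UNIV ind])
  then have yB: "y \<in> span B" by auto
  have "y = (\<Sum>b\<in>B. (y \<bullet> b) *\<^sub>R b)" using orthonormal_basis_expand[OF po n1 yB fin] by simp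
  also have "\<dots> = (y \<bullet> v) *\<^sub>R v + (\<Sum>b\<in>u ` {1..CARD('n)-1}. (y \<bullet> b) *\<^sub>R b)"
    unfolding B_def using vnot by simp
  also have "(\<Sum>b\<in>u ` {1..CARD('n)-1}. (y \<bullet> b) *\<^sub>R b) = (\<Sum>j\<in>{1..CARD('n)-1}. (y \<bullet> u j) *\<^sub>R u j)"
    using sum.reindex[OF u_inj, of "\<lambda>b. (y \<bullet> b) *\<^sub>R b"] by (simp add: o_def)
  finally show ?thesis using y by (simp add: inner_commute)
qed

lemma parseval: assumes y: "v \<bullet> y = 0"
  shows "(norm y)\<^sup>2 = (\<Sum>j\<in>{1..CARD('n)-1}. (u j \<bullet> y)\<^sup>2)"
proof -
  have "(norm y)\<^sup>2 = y \<bullet> y" by (rule power2_norm_eq_inner)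
  also have "\<dots> = y \<bullet> (\<Sum>j\<in>{1..CARD('n)-1}. (u j \<bullet> y) *\<^sub>R u j)" using expand[OF y] by simp
  also have "\<dots> = (\<Sum>j\<in>{1..CARD('n)-1}. (u j \<bullet> y)\<^sup>2)"
    by (simp add: inner_sum_right power2_eq_square inner_commute)
  finally show ?thesis .
qed

end

context sgd begin

definition wb :: "nat \<Rightarrow> nat \<Rightarrow> nat \<Rightarrow> 'w \<Rightarrow> real^'n" where
  "wb N T s x = (1 / real N) *\<^sub>R (\<Sum>i<N. w (k0 + (s + i) * T) x)"
definition ep :: "nat \<Rightarrow> nat \<Rightarrow> nat \<Rightarrow> 'w \<Rightarrow> real^'n" where
  "ep N T s x = PS v *v (wb N T s x - wstar)"

lemma ep_eq: assumes N: "N \<ge> 1"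
  shows "ep N T s x = (1 / real N) *\<^sub>R (\<Sum>i<N. Ep (k0 + (s + i) * T) x)"
proof -
  have "wb N T s x - wstar = (1 / real N) *\<^sub>R (\<Sum>i<N. w (k0 + (s + i) * T) x - wstar)"
  proof -
    have c: "(1 / real N) *\<^sub>R (\<Sum>i<N. wstar) = wstar"
      using N by (simp add: sum_constant_scaleR del: sum_constant)
    show ?thesis unfolding wb_def sum_subtractf scaleR_diff_right c ..
  qed
  then show ?thesis
    unfolding ep_def Ep_def
    by (simp add: matrix_vector_mult_scaleR linear_sum[OF matrix_vector_mul_linear] o_def)
qed

lemma a_eq: assumes N: "N \<ge> 1"
  shows "u j \<bullet> ep N T s x = (1 / real N) * (\<Sum>i<N. bp j (k0 + (s + i) * T) x)"
  unfolding ep_eq[OF N] bp_def by (simp add: inner_sum_right)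

lemma v_ep: "v \<bullet> ep N T s x = 0"
  unfolding ep_def using PS_sym[of v v, symmetric] PSv by simp

lemma a_sqi: assumes j: "j \<in> {1..CARD('n)-1}" and N: "N \<ge> 1"
  shows "sqi M (\<lambda>x. u j \<bullet> ep N T s x)"
  unfolding a_eq[OF N] by (intro sqi_cmult sqi_sum bp_sqi[OF j]) simp

lemma kdist: "(if k0 + (s + i) * T \<le> k0 + (s + i') * T then k0 + (s + i') * T - (k0 + (s + i) * T)
     else k0 + (s + i) * T - (k0 + (s + i') * T)) = (if i \<le> i' then i' - i else i - i') * T"
proof (cases "T = 0")
  case True then show ?thesis by simp
next
  case False
  show ?thesis
  proof (cases "i \<le> i'")
    case True
    then have "k0 + (s + i) * T \<le> k0 + (s + i') * T" by simp
    moreover have "k0 + (s + i') * T - (k0 + (s + i) * T) = i' * T - i * T"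
      by (simp add: add_mult_distrib)
    moreover have "i' * T - i * T = (i' - i) * T" by (simp add: diff_mult_distrib)
    ultimately show ?thesis using True by simp
  next
    case c: False
    then have "\<not> k0 + (s + i) * T \<le> k0 + (s + i') * T" using False by simp
    moreover have "k0 + (s + i) * T - (k0 + (s + i') * T) = i * T - i' * T"
      by (simp add: add_mult_distrib)
    moreover have "i * T - i' * T = (i - i') * T" by (simp add: diff_mult_distrib)
    ultimately show ?thesis using c by simp
  qed
qed

lemma a_sq: assumes j: "j \<in> {1..CARD('n)-1}" and N: "N \<ge> 1"
  shows "(\<integral>x. (u j \<bullet> ep N T s x)\<^sup>2 \<partial>M) =
     (eta * sigma\<^sup>2 / (2 * lam j - eta * (lam j)\<^sup>2)) * (1 / (real N)\<^sup>2)
       * (real N + 2 * (\<Sum>r=1..N-1. real (N - r) * (1 - eta * lam j) ^ (r * T)))"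
proof -
  define \<kappa> where "\<kappa> i = k0 + (s + i) * T" for i
  have k: "k0 \<le> \<kappa> i" for i unfolding \<kappa>_def by simp
  have int: "integrable M (\<lambda>x. bp j (\<kappa> i) x * bp j (\<kappa> i') x)" for i i'
    by (rule sqi_mult[OF bp_sqi[OF j k] bp_sqi[OF j k]])
  have "(\<lambda>x. (u j \<bullet> ep N T s x)\<^sup>2) = (\<lambda>x. (1 / real N)\<^sup>2 * (\<Sum>i<N. \<Sum>i'<N. bp j (\<kappa> i) x * bp j (\<kappa> i') x))"
    unfolding a_eq[OF N] \<kappa>_def by (simp add: power2_eq_square sum_product algebra_simps)
  then have "(\<integral>x. (u j \<bullet> ep N T s x)\<^sup>2 \<partial>M) = (1 / real N)\<^sup>2 * (\<Sum>i<N. \<Sum>i'<N. \<integral>x. bp j (\<kappa> i) x * bp j (\<kappa> i') x \<partial>M)"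
    using int by simp
  also have "(\<Sum>i<N. \<Sum>i'<N. \<integral>x. bp j (\<kappa> i) x * bp j (\<kappa> i') x \<partial>M)
     = (\<Sum>i<N. \<Sum>i'<N. (\<lambda>r. (cc j ^ T) ^ r * (tau j)\<^sup>2) (if i \<le> i' then i' - i else i - i'))"
  proof (intro sum.cong refl)
    fix i i'
    show "(\<integral>x. bp j (\<kappa> i) x * bp j (\<kappa> i') x \<partial>M) = (\<lambda>r. (cc j ^ T) ^ r * (tau j)\<^sup>2) (if i \<le> i' then i' - i else i - i')"
    proof -
      have "(\<integral>x. bp j (\<kappa> i) x * bp j (\<kappa> i') x \<partial>M) = cc j ^ ((if i \<le> i' then i' - i else i - i') * T) * (tau j)\<^sup>2"
        using bp_cov2[OF j k k, of i i'] unfolding \<kappa>_def kdist .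
      moreover have "(cc j ^ T) ^ r = cc j ^ (r * T)" for r by (simp add: power_mult[symmetric] mult.commute)
      ultimately show ?thesis by simp
    qed
  qed
  also have "\<dots> = real N * (tau j)\<^sup>2 + 2 * (\<Sum>r=1..N-1. real (N - r) * ((cc j ^ T) ^ r * (tau j)\<^sup>2))"
    by (subst dist_sum) simp
  also have "\<dots> = (tau j)\<^sup>2 * (real N + 2 * (\<Sum>r=1..N-1. real (N - r) * (1 - eta * lam j) ^ (r * T)))"
    by (simp add: cc_def power_mult[symmetric] sum_distrib_left sum_distrib_right algebra_simps mult.commute[of T])
  finally have X: "(\<integral>x. (u j \<bullet> ep N T s x)\<^sup>2 \<partial>M) = (1 / real N)\<^sup>2 *
     ((tau j)\<^sup>2 * (real N + 2 * (\<Sum>r=1..N-1. real (N - r) * (1 - eta * lam j) ^ (r * T))))" .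
  show ?thesis unfolding X tau_sq[OF j] power_one_over by (simp only: ac_simps)
qed

lemma ep_norm: assumes N: "N \<ge> 1"
  shows "integrable M (\<lambda>x. (norm (ep N T s x))\<^sup>2)"
    and "(\<integral>x. (norm (ep N T s x))\<^sup>2 \<partial>M) = (\<Sum>j=1..CARD('n)-1. (eta * sigma\<^sup>2 / (2 * lam j - eta * (lam j)\<^sup>2))
               * (1 / (real N)\<^sup>2)
               * (real N + 2 * (\<Sum>r=1..N-1. real (N - r) * (1 - eta * lam j) ^ (r * T))))"
proof -
  have e: "(\<lambda>x. (norm (ep N T s x))\<^sup>2) = (\<lambda>x. \<Sum>j\<in>{1..CARD('n)-1}. (u j \<bullet> ep N T s x)\<^sup>2)"
    using parseval[OF v_ep] by simp
  have I: "j \<in> {1..CARD('n)-1} \<Longrightarrow> integrable M (\<lambda>x. (u j \<bullet> ep N T s x)\<^sup>2)" for j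
    using a_sqi[OF _ N] unfolding sqi_def by blast
  show "integrable M (\<lambda>x. (norm (ep N T s x))\<^sup>2)" unfolding e by (rule Bochner_Integration.integrable_sum) (rule I)
  show "(\<integral>x. (norm (ep N T s x))\<^sup>2 \<partial>M) = (\<Sum>j=1..CARD('n)-1. (eta * sigma\<^sup>2 / (2 * lam j - eta * (lam j)\<^sup>2))
               * (1 / (real N)\<^sup>2)
               * (real N + 2 * (\<Sum>r=1..N-1. real (N - r) * (1 - eta * lam j) ^ (r * T))))"
    unfolding e using I a_sq[OF _ N] by simp
qed

lemma ep_coord_sqi: assumes N: "N \<ge> 1"
  shows "sqi M (\<lambda>x. ep N T s x $ i)"
proof -
  have "sqi M (\<lambda>x. \<Sum>j\<in>{1..CARD('n)-1}. u j $ i * (u j \<bullet> ep N T s x))"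
    by (intro sqi_sum sqi_cmult a_sqi N) simp
  moreover have "ep N T s x $ i = (\<Sum>j\<in>{1..CARD('n)-1}. u j $ i * (u j \<bullet> ep N T s x))" for x
    by (subst expand[OF v_ep]) (simp add: mult.commute)
  ultimately show ?thesis by simp
qed

end

theorem mainTheorem3:
  fixes v wstar :: "real^'n" and H :: "real^'n^'n"
    and l l' l'' :: "real \<Rightarrow> real" and gradL :: "real^'n \<Rightarrow> real^'n"
    and lam :: "nat \<Rightarrow> real" and u :: "nat \<Rightarrow> real^'n"
    and mu LS eta muF sigma :: real
    and M :: "'w measure"
    and w g :: "nat \<Rightarrow> 'w \<Rightarrow> real^'n"
    and k0 T N K :: nat
  assumes dim: "CARD('n) \<ge> 2"
    and unit_v: "norm v = 1"
    and l_d1: "\<And>x. (l has_real_derivative l' x) (at x)"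
    and l_d2: "\<And>x. (l' has_real_derivative l'' x) (at x)"
    and l_C2: "continuous_on UNIV l''"
    and H_sym: "transpose H = H"
    and H_psd: "\<And>x. 0 \<le> x \<bullet> (H *v x)"
    and H_PF: "H ** PF v = 0"
    and H_PS: "H ** PS v = H" and PS_H: "PS v ** H = H"
    and mu_pos: "0 < mu" and mu_LS: "mu \<le> LS"
    and eig_orth: "\<And>i j. i \<in> {1..CARD('n)-1} \<Longrightarrow> j \<in> {1..CARD('n)-1} \<Longrightarrow>
                     u i \<bullet> u j = (if i = j then 1 else 0)"
    and eig_perp: "\<And>j. j \<in> {1..CARD('n)-1} \<Longrightarrow> u j \<bullet> v = 0"
    and eig_vec: "\<And>j. j \<in> {1..CARD('n)-1} \<Longrightarrow> H *v u j = lam j *\<^sub>R u j"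
    and eig_range: "\<And>j. j \<in> {1..CARD('n)-1} \<Longrightarrow> mu \<le> lam j \<and> lam j \<le> LS"
    and grad: "\<And>x. (lossL l v H wstar has_derivative (\<lambda>h. gradL x \<bullet> h)) (at x)"
    and eta_pos: "0 < eta" and eta_lt: "eta < 2 / LS"
    and muF_pos: "0 < muF"
    and sigma_pos: "0 < sigma"
    and prob: "prob_space M"
    and w0_meas: "w 0 \<in> borel_measurable M"
    and sgd: "\<And>k x. x \<in> space M \<Longrightarrow>
                 w (Suc k) x = w k x - eta *\<^sub>R gradL (w k x) - (eta * muF) *\<^sub>R v + eta *\<^sub>R g k x"
    and indep: "prob_space.indep_vars M (\<lambda>_. borel)
                  (\<lambda>i. case i of None \<Rightarrow> w 0 | Some k \<Rightarrow> g k) UNIV"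
    and g_ident: "\<And>k. distr M borel (g k) = distr M borel (g 0)"
    and g_flat: "\<And>k. AE x in M. v \<bullet> g k x = 0"
    and g_gauss: "\<And>k a. PS v *v a \<noteq> 0 \<Longrightarrow>
                   distributed M lborel (\<lambda>x. a \<bullet> g k x)
                     (normal_density 0 (sigma * norm (PS v *v a)))"
    and stationary: "\<And>k. k \<ge> k0 \<Longrightarrow>
                   distr M borel (\<lambda>x. PS v *v (w k x - wstar)) = distr M borel (\<lambda>x. PS v *v (w k0 x - wstar))"
    and N_pos: "N \<ge> 1" and K_pos: "K \<ge> 1"
  shows
    "let ckpt = (\<lambda>m x. w (k0 + m * T) x);
         wbar = (\<lambda>s x. (1 / real N) *\<^sub>R (\<Sum>i<N. ckpt (s + i) x));
         eps = (\<lambda>s x. PS v *v (wbar s x - wstar));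
         epsc = (\<lambda>s x. eps s x - (1 / real K) *\<^sub>R (\<Sum>r<K. eps r x));
         Sigma = (\<chi> i j. (1 / real K) * (\<Sum>s<K. integral\<^sup>L M (\<lambda>x. epsc s x $ i * epsc s x $ j)))
     in lambda_max Sigma \<le> trace Sigma
      \<and> trace Sigma \<le> (1 / real K) * (\<Sum>s<K. integral\<^sup>L M (\<lambda>x. (norm (eps s x))\<^sup>2))
      \<and> (1 / real K) * (\<Sum>s<K. integral\<^sup>L M (\<lambda>x. (norm (eps s x))\<^sup>2))
          = (1 / real K) * (\<Sum>s<K. integral\<^sup>L M (\<lambda>x. (Dist v wstar (wbar s x))\<^sup>2))
      \<and> (1 / real K) * (\<Sum>s<K. integral\<^sup>L M (\<lambda>x. (Dist v wstar (wbar s x))\<^sup>2))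
          = (\<Sum>j=1..CARD('n)-1. (eta * sigma\<^sup>2 / (2 * lam j - eta * (lam j)\<^sup>2))
               * (1 / (real N)\<^sup>2)
               * (real N + 2 * (\<Sum>r=1..N-1. real (N - r) * (1 - eta * lam j) ^ (r * T))))"
proof -
  interpret S: sgd M v wstar H l l' gradL lam u mu LS eta muF sigma w g k0
    by (intro sgd.intro sgd_axioms.intro prob)
       (fact dim unit_v l_d1 H_sym H_PF H_PS PS_H mu_pos mu_LS eig_orth eig_perp eig_vec eig_range grad
          eta_pos eta_lt sigma_pos w0_meas sgd indep g_gauss stationary)+
  define Q where "Q s x = S.ep N T s x - (1 / real K) *\<^sub>R (\<Sum>r<K. S.ep N T r x)" for s x
  have sqQ: "sqi M (\<lambda>x. Q s x $ i)" for s i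
  proof -
    have "sqi M (\<lambda>x. S.ep N T s x $ i - (1 / real K) * (\<Sum>r<K. S.ep N T r x $ i))"
      by (intro sqi_diff sqi_cmult sqi_sum S.ep_coord_sqi N_pos)
    moreover have "(\<lambda>x. Q s x $ i) = (\<lambda>x. S.ep N T s x $ i - (1 / real K) * (\<Sum>r<K. S.ep N T r x $ i))"
      by (simp add: Q_def fun_eq_iff)
    ultimately show ?thesis by simp
  qed
  define Sg where "Sg = (\<chi> i j. (1 / real K) * (\<Sum>s<K. integral\<^sup>L M (\<lambda>x. Q s x $ i * Q s x $ j)))"
  note bil = sigma_bilinear[where Q=Q and K=K and M=M, OF sqQ, folded Sg_def]
  note tr = sigma_trace[where Q=Q and K=K and M=M, OF sqQ, folded Sg_def]
  have vQ: "v \<bullet> Q s x = 0" for s x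
    unfolding Q_def by (simp add: inner_diff_right inner_sum_right S.v_ep)
  have Sgv: "Sg *v v = 0"
  proof -
    have "(Sg *v v) \<bullet> (Sg *v v) = 0"
      using bil[where x="Sg *v v" and y=v] by (simp add: vQ)
    then show ?thesis by simp
  qed
  have v0: "v \<noteq> 0" using unit_v by auto
  have A1: "lambda_max Sg \<le> trace Sg"
    using sigma_lambda_max[where Q=Q and K=K and M=M and v=v, OF sqQ K_pos, folded Sg_def, OF v0 Sgv] .
  have epI: "integrable M (\<lambda>x. (norm (S.ep N T s x))\<^sup>2)" for s
    by (rule S.ep_norm(1)[OF N_pos])
  have A2: "trace Sg \<le> (1 / real K) * (\<Sum>s<K. integral\<^sup>L M (\<lambda>x. (norm (S.ep N T s x))\<^sup>2))"
  proof -
    have "(\<Sum>s<K. integral\<^sup>L M (\<lambda>x. (norm (Q s x))\<^sup>2)) = integral\<^sup>L M (\<lambda>x. \<Sum>s<K. (norm (Q s x))\<^sup>2)"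
      using tr(2) by (simp add: Bochner_Integration.integral_sum)
    also have "\<dots> \<le> integral\<^sup>L M (\<lambda>x. \<Sum>s<K. (norm (S.ep N T s x))\<^sup>2)"
    proof (rule integral_mono)
      show "integrable M (\<lambda>x. \<Sum>s<K. (norm (Q s x))\<^sup>2)"
        by (rule Bochner_Integration.integrable_sum) (use tr(2) in auto)
      show "integrable M (\<lambda>x. \<Sum>s<K. (norm (S.ep N T s x))\<^sup>2)"
        using epI by (simp add: Bochner_Integration.integrable_sum)
      fix x show "(\<Sum>s<K. (norm (Q s x))\<^sup>2) \<le> (\<Sum>s<K. (norm (S.ep N T s x))\<^sup>2)"
        unfolding Q_def by (rule centered_sum_le[OF K_pos])
    qed
    also have "\<dots> = (\<Sum>s<K. integral\<^sup>L M (\<lambda>x. (norm (S.ep N T s x))\<^sup>2))"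
      using epI by (simp add: Bochner_Integration.integral_sum)
    finally show ?thesis unfolding tr(1) using K_pos by (simp add: divide_right_mono)
  qed
  have A3: "(\<lambda>x. (norm (S.ep N T s x))\<^sup>2) = (\<lambda>x. (Dist v wstar (S.wb N T s x))\<^sup>2)" for s
    by (simp add: Dist_def S.ep_def)
  have A4: "(1 / real K) * (\<Sum>s<K. integral\<^sup>L M (\<lambda>x. (norm (S.ep N T s x))\<^sup>2))
      = (\<Sum>j=1..CARD('n)-1. (eta * sigma\<^sup>2 / (2 * lam j - eta * (lam j)\<^sup>2))
               * (1 / (real N)\<^sup>2)
               * (real N + 2 * (\<Sum>r=1..N-1. real (N - r) * (1 - eta * lam j) ^ (r * T))))"
    using K_pos by (simp add: S.ep_norm(2)[OF N_pos])
  have main: "lambda_max Sg \<le> trace Sg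
      \<and> trace Sg \<le> (1 / real K) * (\<Sum>s<K. integral\<^sup>L M (\<lambda>x. (norm (S.ep N T s x))\<^sup>2))
      \<and> (1 / real K) * (\<Sum>s<K. integral\<^sup>L M (\<lambda>x. (norm (S.ep N T s x))\<^sup>2))
          = (1 / real K) * (\<Sum>s<K. integral\<^sup>L M (\<lambda>x. (Dist v wstar (S.wb N T s x))\<^sup>2))
      \<and> (1 / real K) * (\<Sum>s<K. integral\<^sup>L M (\<lambda>x. (Dist v wstar (S.wb N T s x))\<^sup>2))
          = (\<Sum>j=1..CARD('n)-1. (eta * sigma\<^sup>2 / (2 * lam j - eta * (lam j)\<^sup>2))
               * (1 / (real N)\<^sup>2)
               * (real N + 2 * (\<Sum>r=1..N-1. real (N - r) * (1 - eta * lam j) ^ (r * T))))"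
    using A1 A2 A4 unfolding A3 by simp
  show ?thesis
    unfolding Let_def
    using main unfolding Sg_def Q_def S.ep_def S.wb_def .
qed

end
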